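(* Assume the setting and standing assumptions (A1), (A2) described in the context. If there exists $\Delta \in \mathcal{D}$ for which the system exhibits microphase separation, then $\Psi^+$ is initially positive, i.e. there exists $\hat\kappa>0$ such that $\Psi^+(\kappa)>0$ for all $\kappa\in(0,\hat\kappa)$.
   Context: Let $n,m\ge 1$, $B\in\mathbb{Z}^{n\times m}$, $C\in\mathbb{Z}^{m\times n}$. Given bounds $0\le \Delta_j^-\le \Delta_j^+<\infty$ ($j=1,\dots,m$), let $\mathcal{D}$ be the set of diagonal matrices $\Delta=\mathrm{diag}(\Delta_1,\dots,\Delta_m)$ with $\Delta_j^-\le\Delta_j\le\Delta_j^+$ for all $j$. Let $J_2,J_4\in\mathbb{R}^{n\times n}$ be symmetric. Standing assumptions: (A1) for every $\Delta\in\mathcal{D}$, the matrix $B\Delta C$ is singular and has $n-1$ eigenvalues (counted with multiplicity) with negative real part (so $0$ is a simple eigenvalue), and there is a nonzero vector $v\ge 0$ with $v^\top B=0$; (A2) $J_2$ is indefinite, $J_4$ is negative semidefinite, and there exists $\bar\kappa$ such that $\bar\kappa^2 J_2+\bar\kappa^4 J_4$ is negative definite. For real $\kappa\ge 0$ and $\Delta\in\mathcal{D}$ set $J(\Delta,\kappa)=B\Delta C+\kappa^2 J_2+\kappa^4 J_4$ and let $\rho(\Delta,\kappa)$ be its spectral abscissa (the maximum real part of its eigenvalues). Define $\Psi^-(\kappa)=\min_{\Delta\in\mathcal{D}}\det[-J(\Delta,\kappa)]$ and $\Psi^+(\kappa)=\max_{\Delta\in\mathcal{D}}\det[-J(\Delta,\kappa)]$.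 A continuous function $f$ on $[0,\infty)$ is initially positive (resp. negative) if there is $\hat\kappa>0$ with $f>0$ (resp. $f<0$) on $(0,\hat\kappa)$; it has a negative sign change if $f(\kappa_1)>0>f(\kappa_2)$ for some $\kappa_1<\kappa_2$, and a positive sign change if $f(\kappa_1)<0<f(\kappa_2)$ for some $\kappa_1<\kappa_2$. For a given $\Delta\in\mathcal{D}$, the system exhibits microphase separation (MS) if there exists $\hat\kappa>0$ with $\rho(\Delta,\kappa)<0$ for all $\kappa\in(0,\hat\kappa)$, and there exist $\hat\kappa<\kappa_1<\kappa_2$ with $\rho(\Delta,\kappa_1)>0$ and $\rho(\Delta,\kappa_2)<0$. The system exhibits robust MS if it exhibits MS for every $\Delta\in\mathcal{D}$. *)

theory Defs
  imports "HOL-Analysis.Analysis" "HOL-Computational_Algebra.Polynomial"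
begin

definition diag_mat :: "real ^'m \<Rightarrow> real ^'m ^'m" where
  "diag_mat d = (\<chi> i j. if i = j then d $ i else 0)"

definition Dset :: "real ^'m \<Rightarrow> real ^'m \<Rightarrow> (real ^'m) set" where
  "Dset lo hi = {d. \<forall>j. lo $ j \<le> d $ j \<and> d $ j \<le> hi $ j}"

definition charpoly :: "real ^'n ^'n \<Rightarrow> complex poly" where
  "charpoly A = det (\<chi> i j. (if i = j then [:0, 1:] else 0) - [: complex_of_real (A $ i $ j) :])"

definition eigenvalues :: "real ^'n ^'n \<Rightarrow> complex set" where
  "eigenvalues A = {z. poly (charpoly A) z = 0}"

definition spectral_abscissa :: "real ^'n ^'n \<Rightarrow> real" where
  "spectral_abscissa A = Max (Re ` eigenvalues A)"

definition Jmat :: "real ^'m ^'n \<Rightarrow> real ^'n ^'m \<Rightarrow> real ^'n ^'n \<Rightarrow> real ^'n ^'n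
     \<Rightarrow> real ^'m \<Rightarrow> real \<Rightarrow> real ^'n ^'n" where
  "Jmat B C J2 J4 d \<kappa> = B ** diag_mat d ** C + (\<kappa>^2) *\<^sub>R J2 + (\<kappa>^4) *\<^sub>R J4"

definition rho :: "real ^'m ^'n \<Rightarrow> real ^'n ^'m \<Rightarrow> real ^'n ^'n \<Rightarrow> real ^'n ^'n
     \<Rightarrow> real ^'m \<Rightarrow> real \<Rightarrow> real" where
  "rho B C J2 J4 d \<kappa> = spectral_abscissa (Jmat B C J2 J4 d \<kappa>)"

definition Psi_plus :: "real ^'m ^'n \<Rightarrow> real ^'n ^'m \<Rightarrow> real ^'n ^'n \<Rightarrow> real ^'n ^'n
     \<Rightarrow> real ^'m \<Rightarrow> real ^'m \<Rightarrow> real \<Rightarrow> real" where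
  "Psi_plus B C J2 J4 lo hi \<kappa> = (SUP d \<in> Dset lo hi. det (- Jmat B C J2 J4 d \<kappa>))"

definition exhibits_MS :: "real ^'m ^'n \<Rightarrow> real ^'n ^'m \<Rightarrow> real ^'n ^'n \<Rightarrow> real ^'n ^'n
     \<Rightarrow> real ^'m \<Rightarrow> bool" where
  "exhibits_MS B C J2 J4 d \<longleftrightarrow>
     (\<exists>\<kappa>h>0. (\<forall>\<kappa>\<in>{0<..<\<kappa>h}. rho B C J2 J4 d \<kappa> < 0) \<and>
        (\<exists>\<kappa>1 \<kappa>2. \<kappa>h < \<kappa>1 \<and> \<kappa>1 < \<kappa>2 \<and> rho B C J2 J4 d \<kappa>1 > 0 \<and> rho B C J2 J4 d \<kappa>2 < 0))"

definition initially_positive :: "(real \<Rightarrow> real) \<Rightarrow> bool" where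
  "initially_positive f \<longleftrightarrow> (\<exists>\<kappa>h>0. \<forall>\<kappa>\<in>{0<..<\<kappa>h}. f \<kappa> > 0)"

definition symmetric_mat :: "real ^'n ^'n \<Rightarrow> bool" where
  "symmetric_mat A \<longleftrightarrow> transpose A = A"

definition indefinite :: "real ^'n ^'n \<Rightarrow> bool" where
  "indefinite A \<longleftrightarrow> (\<exists>x. x \<bullet> (A *v x) > 0) \<and> (\<exists>y. y \<bullet> (A *v y) < 0)"

definition neg_semidef :: "real ^'n ^'n \<Rightarrow> bool" where
  "neg_semidef A \<longleftrightarrow> (\<forall>x. x \<bullet> (A *v x) \<le> 0)"

definition neg_def :: "real ^'n ^'n \<Rightarrow> bool" where
  "neg_def A \<longleftrightarrow> (\<forall>x. x \<noteq> 0 \<longrightarrow> x \<bullet> (A *v x) < 0)"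

end

theory Submission
  imports Defs
begin

lemma charpoly_real:
  fixes A :: "real^'n^'n"
  shows "poly (charpoly A) (complex_of_real x) =
    complex_of_real (det (\<chi> i j. (if i = j then x else 0) - A$i$j))"
  unfolding charpoly_def det_def
  by (simp add: poly_sum poly_prod of_real_sum of_real_prod if_distrib[of "\<lambda>p. poly p _"]
      if_distrib[of complex_of_real] cong: if_cong)

lemma cont_det:
  fixes F :: "'a::topological_space \<Rightarrow> real^'n^'n"
  assumes "\<And>i j. continuous_on S (\<lambda>x. F x $ i $ j)"
  shows "continuous_on S (\<lambda>x. det (F x))"
  unfolding det_def by (intro continuous_intros assms)

lemma det_scale:
  fixes M :: "real^'n^'n"
  shows "det (c *\<^sub>R M) = c ^ CARD('n) * det M"
  unfolding det_def
  by (simp add: sum_distrib_left prod.distrib prod_constant algebra_simps)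

lemma key_stable_det:
  fixes A :: "real^'n^'n"
  assumes sa: "spectral_abscissa A < 0"
  shows "det (-A) > 0"
proof -
  define f where "f x = det (\<chi> i j. (if i = j then x else 0) - A$i$j)" for x
  define h where "h t = det (\<chi> i j. (if i = j then 1 else 0) - t * A$i$j)" for t
  have hc: "continuous_on UNIV h"
    unfolding h_def by (intro cont_det) (simp add: continuous_intros)
  have fc: "continuous_on UNIV f"
    unfolding f_def
  proof (intro cont_det)
    fix i j
    show "continuous_on UNIV (\<lambda>x. (\<chi> i j. (if i = j then x else 0) - A$i$j) $ i $ j)"
      by (cases "i = j") (auto intro!: continuous_intros)
  qed
  have h0: "h 0 = 1"
  proof -
    have "(\<chi> i j. (if i = j then 1 else 0) - 0 * A$i$j) = (mat 1 :: real^'n^'n)"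
      by (simp add: mat_def vec_eq_iff)
    then show ?thesis unfolding h_def by simp
  qed
  have "(h \<longlongrightarrow> h 0) (at_right 0)"
    using hc by (meson UNIV_I continuous_on_def tendsto_within_subset subset_UNIV at_within_open open_UNIV
        filterlim_at_split isCont_def continuous_on_eq_continuous_at)
  then have "eventually (\<lambda>t. h t > 0) (at_right 0)"
    using h0 by (intro order_tendstoD) auto
  then obtain b where b: "b > 0" "\<And>y. y > 0 \<Longrightarrow> y < b \<Longrightarrow> h y > 0"
    unfolding eventually_at_right_field by auto
  define t0 where "t0 = b / 2"
  have t0: "t0 > 0" "h t0 > 0" using b unfolding t0_def by auto
  define X where "X = 1 / t0"
  have X: "X > 0" using t0 unfolding X_def by auto
  have "(\<chi> i j. (if i = j then X else 0) - A$i$j) = X *\<^sub>R (\<chi> i j. (if i = j then 1 else 0) - t0 * A$i$j)"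
    using t0 by (simp add: vec_eq_iff X_def field_simps)
  then have fX: "f X = X ^ CARD('n) * h t0"
    unfolding f_def h_def by (simp add: det_scale)
  have fXp: "f X > 0" using fX X t0 by simp
  have cp: "charpoly A \<noteq> 0"
  proof
    assume "charpoly A = 0"
    then have "poly (charpoly A) (complex_of_real X) = 0" by simp
    then have "f X = 0" unfolding f_def charpoly_real by simp
    then show False using fXp by simp
  qed
  have fin: "finite (eigenvalues A)"
    unfolding eigenvalues_def using poly_roots_finite[OF cp] .
  have nz: "f x \<noteq> 0" if "x \<ge> 0" for x
  proof
    assume "f x = 0"
    then have "complex_of_real x \<in> eigenvalues A"
      unfolding eigenvalues_def f_def by (simp add: charpoly_real)
    then have "Re (complex_of_real x) \<le> spectral_abscissa A"
      unfolding spectral_abscissa_def using fin by (intro Max_ge) (auto intro: image_eqI[where x="complex_of_real x"])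
    then show False using sa that by simp
  qed
  have "f 0 > 0"
  proof (rule ccontr)
    assume "\<not> f 0 > 0"
    then have "f 0 \<le> 0" by simp
    then obtain x where "0 \<le> x" "x \<le> X" "f x = 0"
      using IVT'[of f 0 0 X] fXp X fc continuous_on_subset by fastforce
    then show False using nz by blast
  qed
  moreover have "(\<chi> i j. (if i = j then (0::real) else 0) - A$i$j) = -A"
    by (simp add: vec_eq_iff)
  ultimately show ?thesis unfolding f_def by simp
qed

theorem theorem1:
  fixes B :: "real ^'m ^'n" and C :: "real ^'n ^'m"
    and lo hi :: "real ^'m" and J2 J4 :: "real ^'n ^'n"
  assumes B_int: "\<forall>i j. B $ i $ j \<in> \<int>"
    and C_int: "\<forall>i j. C $ i $ j \<in> \<int>"
    and bounds: "\<forall>j. 0 \<le> lo $ j \<and> lo $ j \<le> hi $ j"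
    and A1_sing: "\<forall>d\<in>Dset lo hi. det (B ** diag_mat d ** C) = 0"
    and A1_stable: "\<forall>d\<in>Dset lo hi.
        (\<Sum>z\<in>{z\<in>eigenvalues (B ** diag_mat d ** C). Re z < 0}.
            order z (charpoly (B ** diag_mat d ** C))) = CARD('n) - 1"
    and A1_v: "\<exists>v::real^'n. v \<noteq> 0 \<and> (\<forall>i. 0 \<le> v $ i) \<and> v v* B = 0"
    and J2_sym: "symmetric_mat J2" and J4_sym: "symmetric_mat J4"
    and A2_J2: "indefinite J2"
    and A2_J4: "neg_semidef J4"
    and A2_kbar: "\<exists>\<kappa>b::real. neg_def ((\<kappa>b^2) *\<^sub>R J2 + (\<kappa>b^4) *\<^sub>R J4)"
    and MS: "\<exists>d\<in>Dset lo hi. exhibits_MS B C J2 J4 d"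
  shows "initially_positive (Psi_plus B C J2 J4 lo hi)"
proof -
  obtain d where dD: "d \<in> Dset lo hi" and ms: "exhibits_MS B C J2 J4 d" using MS by blast
  obtain kh where kh: "kh > 0" "\<forall>\<kappa>\<in>{0<..<kh}. rho B C J2 J4 d \<kappa> < 0"
    using ms unfolding exhibits_MS_def by blast
  have Dbox: "Dset lo hi = cbox lo hi"
    unfolding Dset_def by (auto simp: mem_box_cart)
  have bdd: "bdd_above ((\<lambda>d. det (- Jmat B C J2 J4 d \<kappa>)) ` Dset lo hi)" for \<kappa>
  proof -
    have "continuous_on (cbox lo hi) (\<lambda>d. det (- Jmat B C J2 J4 d \<kappa>))"
    proof (intro cont_det)
      fix i j
      have e: "(- Jmat B C J2 J4 d' \<kappa>) $ i $ j = - ((\<Sum>k\<in>UNIV. B$i$k * d'$k * C$k$j)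
          + \<kappa>^2 * J2$i$j + \<kappa>^4 * J4$i$j)" for d'
      proof -
        have "(B ** diag_mat d' ** C) $ i $ j = (\<Sum>k\<in>UNIV. B$i$k * d'$k * C$k$j)"
          by (simp add: matrix_matrix_mult_def diag_mat_def if_distrib[of "\<lambda>x. _ * x"]
              sum.distrib sum_distrib_right cong: if_cong)
        then show ?thesis by (simp add: Jmat_def)
      qed
      show "continuous_on (cbox lo hi) (\<lambda>d'. (- Jmat B C J2 J4 d' \<kappa>) $ i $ j)"
        unfolding e by (intro continuous_intros)
    qed
    then have "compact ((\<lambda>d. det (- Jmat B C J2 J4 d \<kappa>)) ` cbox lo hi)"
      by (intro compact_continuous_image) auto
    then show ?thesis unfolding Dbox by (intro bounded_imp_bdd_above compact_imp_bounded)
  qed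
  show ?thesis
    unfolding initially_positive_def
  proof (intro exI[of _ kh] conjI ballI kh(1))
    fix \<kappa> assume k: "\<kappa> \<in> {0<..<kh}"
    have "det (- Jmat B C J2 J4 d \<kappa>) > 0"
      using kh(2) k by (intro key_stable_det) (simp add: rho_def)
    also have "det (- Jmat B C J2 J4 d \<kappa>) \<le> Psi_plus B C J2 J4 lo hi \<kappa>"
      unfolding Psi_plus_def by (rule cSUP_upper[OF dD bdd])
    finally show "Psi_plus B C J2 J4 lo hi \<kappa> > 0" .
  qed
qed

end
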